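(* There is a circuit with $O(n)$ generalized boolean gates and depth $O(\log n)$ that solves the generalized binary-to-unary conversion problem on $n$ receivers: given indicator bits $x[1],\dots,x[n]$ and an integer $\ell\in\{0,1,\dots,n\}$ in binary, it outputs bits $y[1],\dots,y[n]$ such that among the indices $i$ with $x[i]=1$, the first $\ell$ such indices (in increasing order) have $y[i]=1$ and all the others have $y[i]=0$ (indices with $x[i]=0$ may receive arbitrary bits).
   Context: A generalized boolean gate has constant fan-in and constant fan-out and computes an arbitrary fixed truth table. Depth is the longest input-to-output path length. *)

theory Defs
  imports Complex_Main
begin

text \<open>Wires 0..<m are the m circuit inputs;
the g-th gate (0-based) produces wire m+g.\<close>

datatype circuit = Circuit
  (c_inputs: nat)
  (c_gates: "(nat list \<times> (bool list \<Rightarrow> bool)) list")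
  (c_outputs: "nat list")

definition size_c :: "circuit \<Rightarrow> nat" where
  "size_c C = length (c_gates C)"

definition wf_circuit :: "circuit \<Rightarrow> bool" where
  "wf_circuit C \<longleftrightarrow>
     (\<forall>g < length (c_gates C). \<forall>p \<in> set (fst (c_gates C ! g)). p < c_inputs C + g) \<and>
     (\<forall>w \<in> set (c_outputs C). w < c_inputs C + length (c_gates C))"

definition max_fanin :: "circuit \<Rightarrow> nat \<Rightarrow> bool" where
  "max_fanin C c \<longleftrightarrow> (\<forall>gt \<in> set (c_gates C). length (fst gt) \<le> c)"

definition fanout :: "circuit \<Rightarrow> nat \<Rightarrow> nat" where
  "fanout C w = sum_list (map (\<lambda>gt. count_list (fst gt) w) (c_gates C)) + count_list (c_outputs C) w"

definition max_fanout :: "circuit \<Rightarrow> nat \<Rightarrow> bool" where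
  "max_fanout C c \<longleftrightarrow> (\<forall>w < c_inputs C + length (c_gates C). fanout C w \<le> c)"

definition wire_vals :: "circuit \<Rightarrow> bool list \<Rightarrow> bool list" where
  "wire_vals C inp = foldl (\<lambda>vs gt. vs @ [snd gt (map (\<lambda>p. vs ! p) (fst gt))]) inp (c_gates C)"

definition eval_circuit :: "circuit \<Rightarrow> bool list \<Rightarrow> bool list" where
  "eval_circuit C inp = map (\<lambda>w. wire_vals C inp ! w) (c_outputs C)"

text \<open>Depth of each wire: inputs have depth 0, a gate has depth 1 + max depth of the wires
it reads (so this is the length of the longest path ending at it; for gates with no inputs
it counts 1, an upper bound).\<close>
definition wire_depths :: "circuit \<Rightarrow> nat list" where
  "wire_depths C = foldl (\<lambda>ds gt. ds @ [Suc (Max (insert 0 (set (map (\<lambda>p. ds ! p) (fst gt)))))])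
                      (replicate (c_inputs C) 0) (c_gates C)"

definition depth_c :: "circuit \<Rightarrow> nat" where
  "depth_c C = Max (insert 0 (set (map (\<lambda>w. wire_depths C ! w) (c_outputs C))))"

definition nbits :: "nat \<Rightarrow> nat" where
  "nbits n = (LEAST k. n < 2 ^ k)"

text \<open>Input encoding: the n indicator bits, followed by the binary digits of l
(least significant first).\<close>
definition b2u_input :: "nat \<Rightarrow> bool list \<Rightarrow> nat \<Rightarrow> bool list" where
  "b2u_input n x l = x @ map (\<lambda>j. odd (l div 2 ^ j)) [0..<nbits n]"

definition solves_b2u :: "nat \<Rightarrow> circuit \<Rightarrow> bool" where
  "solves_b2u n C \<longleftrightarrow>
     c_inputs C = n + nbits n \<and> length (c_outputs C) = n \<and>
     (\<forall>x l. length x = n \<longrightarrow> l \<le> n \<longrightarrow>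
        (let y = eval_circuit C (b2u_input n x l) in
          \<forall>i < n. x ! i \<longrightarrow> (y ! i \<longleftrightarrow> card {j. j < i \<and> x ! j} < l)))"

end

theory Submission
  imports Defs
begin


datatype node = In nat | C nat nat nat | Cy nat nat nat | M nat nat nat | Br nat nat nat
  | Dk nat nat | Z nat nat nat | P nat nat | G nat nat

lemma foldl_app:
  fixes F :: "nat list \<times> 'g \<Rightarrow> 'a list \<Rightarrow> 'a" and gs :: "(nat list \<times> 'g) list"
  assumes "\<forall>g<length gs. \<forall>p\<in>set (fst (gs!g)). p < length base + g"
  shows "length (foldl (\<lambda>vs gt. vs @ [F gt (map (\<lambda>p. vs!p) (fst gt))]) base gs) = length base + length gs \<and>
    (\<forall>i<length base. foldl (\<lambda>vs gt. vs @ [F gt (map (\<lambda>p. vs!p) (fst gt))]) base gs ! i = base ! i) \<and>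
    (\<forall>g<length gs. foldl (\<lambda>vs gt. vs @ [F gt (map (\<lambda>p. vs!p) (fst gt))]) base gs ! (length base + g)
       = F (gs!g) (map (\<lambda>p. foldl (\<lambda>vs gt. vs @ [F gt (map (\<lambda>p. vs!p) (fst gt))]) base gs ! p) (fst (gs!g))))"
  using assms
proof (induction gs rule: rev_induct)
  case Nil
  then show ?case by simp
next
  case (snoc x xs)
  define R where "R = foldl (\<lambda>vs gt. vs @ [F gt (map (\<lambda>p. vs!p) (fst gt))]) base xs"
  have h: "\<forall>g<length xs. \<forall>p\<in>set (fst (xs!g)). p < length base + g"
    using snoc.prems by (auto simp: nth_append)
  have hx: "\<forall>p\<in>set (fst x). p < length base + length xs"
    using snoc.prems[rule_format, of "length xs"] by auto
  from snoc.IH[OF h] have IH: "length R = length base + length xs"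
    "\<forall>i<length base. R ! i = base ! i"
    "\<forall>g<length xs. R ! (length base + g) = F (xs!g) (map (\<lambda>p. R ! p) (fst (xs!g)))"
    unfolding R_def by auto
  have eq: "foldl (\<lambda>vs gt. vs @ [F gt (map (\<lambda>p. vs!p) (fst gt))]) base (xs @ [x]) = R @ [F x (map (\<lambda>p. R!p) (fst x))]"
    by (simp add: R_def)
  show ?case unfolding eq
  proof (intro conjI allI impI)
    show "length (R @ [F x (map ((!) R) (fst x))]) = length base + length (xs @ [x])" using IH by simp
  next
    fix i assume "i < length base" then show "(R @ [F x (map ((!) R) (fst x))]) ! i = base ! i"
      using IH by (simp add: nth_append)
  next
    fix g assume g: "g < length (xs @ [x])"
    have m: "map (\<lambda>p. (R @ [F x (map ((!) R) (fst x))]) ! p) (fst ((xs @ [x]) ! g)) = map ((!) R) (fst ((xs @ [x]) ! g))"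
    proof (rule map_cong[OF refl])
      fix p assume "p \<in> set (fst ((xs @ [x]) ! g))"
      then have "p < length R" using h hx IH g
        by (cases "g < length xs") (auto simp: nth_append, fastforce)
      then show "(R @ [F x (map ((!) R) (fst x))]) ! p = R ! p" by (simp add: nth_append)
    qed
    show "(R @ [F x (map ((!) R) (fst x))]) ! (length base + g) =
         F ((xs @ [x]) ! g) (map (\<lambda>p. (R @ [F x (map ((!) R) (fst x))]) ! p) (fst ((xs @ [x]) ! g)))"
      unfolding m using IH g by (cases "g < length xs") (auto simp: nth_append)
  qed
qed

definition pos :: "node list \<Rightarrow> node \<Rightarrow> nat" where
  "pos gs v = (THE g. g < length gs \<and> gs ! g = v)"

definition idx :: "nat \<Rightarrow> node list \<Rightarrow> node \<Rightarrow> nat" where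
  "idx m gs v = (case v of In i \<Rightarrow> i | _ \<Rightarrow> m + pos gs v)"

definition build :: "nat \<Rightarrow> node list \<Rightarrow> (node \<Rightarrow> node list) \<Rightarrow> (node \<Rightarrow> bool list \<Rightarrow> bool) \<Rightarrow> node list \<Rightarrow> circuit" where
  "build m gs pr fn outs = Circuit m (map (\<lambda>v. (map (idx m gs) (pr v), fn v)) gs) (map (idx m gs) outs)"

lemma pos_nth: "distinct gs \<Longrightarrow> g < length gs \<Longrightarrow> pos gs (gs ! g) = g"
  unfolding pos_def by (rule the_equality) (auto simp: nth_eq_iff_index_eq)

lemma pos_in: "distinct gs \<Longrightarrow> v \<in> set gs \<Longrightarrow> pos gs v < length gs \<and> gs ! pos gs v = v"
  by (metis in_set_conv_nth pos_nth)

locale compiled =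
  fixes m :: nat and gs :: "node list" and pr :: "node \<Rightarrow> node list" and fn :: "node \<Rightarrow> bool list \<Rightarrow> bool"
    and rk :: "node \<Rightarrow> nat" and outs :: "node list"
  assumes dist: "distinct gs"
    and noin: "\<And>i. In i \<notin> set gs"
    and srt: "sorted (map rk gs)"
    and prs: "\<And>v u. v \<in> set gs \<Longrightarrow> u \<in> set (pr v) \<Longrightarrow> rk u < rk v \<and> (u \<in> set gs \<or> (\<exists>i<m. u = In i))"
    and rk1: "\<And>v. v \<in> set gs \<Longrightarrow> 1 \<le> rk v"
    and outsd: "\<And>u. u \<in> set outs \<Longrightarrow> u \<in> set gs \<or> (\<exists>i<m. u = In i)"
begin

definition "Dm = set gs \<union> In ` {..<m}"
abbreviation "CC \<equiv> build m gs pr fn outs"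

lemma idx_gate: "g < length gs \<Longrightarrow> idx m gs (gs ! g) = m + g"
proof -
  assume g: "g < length gs"
  have "\<forall>i. gs ! g \<noteq> In i" using noin g nth_mem by metis
  then show ?thesis unfolding idx_def using pos_nth[OF dist g] by (cases "gs ! g") auto
qed

lemma idx_in[simp]: "idx m gs (In i) = i" unfolding idx_def by simp

lemma idx_inj: "u \<in> Dm \<Longrightarrow> v \<in> Dm \<Longrightarrow> idx m gs u = idx m gs v \<Longrightarrow> u = v"
  unfolding Dm_def using idx_gate pos_in[OF dist] dist
  by auto (metis add_diff_cancel_left' idx_gate in_set_conv_nth not_add_less1 , metis in_set_conv_nth idx_gate not_add_less1, metis in_set_conv_nth idx_gate not_add_less1)

lemma idx_dom: "u \<in> Dm \<Longrightarrow> idx m gs u < m + length gs"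
  unfolding Dm_def using idx_gate by (auto simp: in_set_conv_nth)

lemma before: "g < length gs \<Longrightarrow> u \<in> set (pr (gs ! g)) \<Longrightarrow> idx m gs u < m + g"
proof -
  assume g: "g < length gs" and u: "u \<in> set (pr (gs ! g))"
  from prs[OF nth_mem[OF g] u] have r: "rk u < rk (gs ! g)" and d: "u \<in> set gs \<or> (\<exists>i<m. u = In i)" by auto
  show ?thesis
  proof (cases "u \<in> set gs")
    case True
    then obtain g' where g': "g' < length gs" "gs ! g' = u" by (auto simp: in_set_conv_nth)
    have "g' < g"
    proof (rule ccontr)
      assume "\<not> g' < g"
      then have "rk (gs ! g) \<le> rk (gs ! g')" using srt g' g
        using sorted_nth_mono[OF srt, of g g'] by simp
      then show False using r g' by simp
    qed
    then show ?thesis using idx_gate g' by auto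
  next
    case False then show ?thesis using d by auto
  qed
qed

lemma wf: "wf_circuit CC"
proof -
  have "\<forall>w\<in>set outs. idx m gs w < m + length gs" using outsd idx_dom unfolding Dm_def by blast
  moreover have "\<forall>g<length gs. \<forall>p\<in>set (map (idx m gs) (pr (gs ! g))). p < m + g"
    using before by auto
  ultimately show ?thesis unfolding wf_circuit_def build_def by simp
qed

lemma size: "size_c CC = length gs" by (simp add: size_c_def build_def)

lemma gate_pre: "\<forall>g<length (c_gates CC). \<forall>p\<in>set (fst (c_gates CC ! g)). p < length inp + g"
  if "length inp = m" for inp :: "'x list"
  using before that by (auto simp: build_def)

lemma vals:
  assumes len: "length inp = m"
    and sin: "\<And>i. i < m \<Longrightarrow> sem (In i) = inp ! i"
    and sg: "\<And>v. v \<in> set gs \<Longrightarrow> sem v = fn v (map sem (pr v))"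
  shows "u \<in> Dm \<Longrightarrow> wire_vals CC inp ! idx m gs u = sem u"
proof (induction "rk u" arbitrary: u rule: less_induct)
  case less
  have F: "length (wire_vals CC inp) = m + length gs \<and>
    (\<forall>i<m. wire_vals CC inp ! i = inp ! i) \<and>
    (\<forall>g<length gs. wire_vals CC inp ! (m + g) = fn (gs ! g) (map (\<lambda>p. wire_vals CC inp ! p) (map (idx m gs) (pr (gs!g)))))"
    using foldl_app[of "c_gates CC" inp "\<lambda>gt bs. snd gt bs", OF gate_pre[OF len]] len
    unfolding wire_vals_def by (simp add: build_def)
  show ?case
  proof (cases "u \<in> set gs")
    case True
    then obtain g where g: "g < length gs" "gs ! g = u" by (auto simp: in_set_conv_nth)
    have "map (\<lambda>p. wire_vals CC inp ! p) (map (idx m gs) (pr u)) = map sem (pr u)"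
    proof -
      have "\<forall>x\<in>set (pr u). wire_vals CC inp ! idx m gs x = sem x"
        using less prs[OF True] unfolding Dm_def by blast
      then show ?thesis by simp
    qed
    then have e: "map ((!) (wire_vals CC inp) \<circ> idx m gs) (pr u) = map sem (pr u)" by simp
    have "wire_vals CC inp ! (m + g) = fn u (map ((!) (wire_vals CC inp) \<circ> idx m gs) (pr u))"
      using F g by auto
    then have "wire_vals CC inp ! (m + g) = sem u" unfolding e using sg[OF True] by simp
    then show ?thesis using g idx_gate by auto
  next
    case False
    then obtain i where "i < m" "u = In i" using less.prems unfolding Dm_def by auto
    then show ?thesis using F sin by auto
  qed
qed

lemma depths:
  assumes len: "length inp = m"
  shows "u \<in> Dm \<Longrightarrow> wire_depths CC ! idx m gs u \<le> rk u"
proof (induction "rk u" arbitrary: u rule: less_induct)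
  case less
  define W where "W = wire_depths CC"
  have F: "length W = m + length gs \<and>
    (\<forall>i<m. W ! i = 0) \<and>
    (\<forall>g<length gs. W ! (m + g) = Suc (Max (insert 0 (set (map (\<lambda>p. W ! p) (map (idx m gs) (pr (gs!g))))))))"
    using foldl_app[of "c_gates CC" "replicate m (0::nat)" "\<lambda>gt ds. Suc (Max (insert 0 (set ds)))"] gate_pre[of "replicate m (0::nat)"]
    unfolding wire_depths_def W_def by (simp add: build_def)
  show ?case
  proof (cases "u \<in> set gs")
    case True
    then obtain g where g: "g < length gs" "gs ! g = u" by (auto simp: in_set_conv_nth)
    have "\<forall>x \<in> set (map (\<lambda>p. W ! p) (map (idx m gs) (pr u))). x < rk u"
      using less prs[OF True] unfolding Dm_def W_def by fastforce
    then have "Max (insert 0 (set (map (\<lambda>p. W ! p) (map (idx m gs) (pr u))))) < rk u"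
      using rk1[OF True] by (subst Max_less_iff) auto
    moreover have "W ! (m + g) = Suc (Max (insert 0 (set (map (\<lambda>p. W ! p) (map (idx m gs) (pr u))))))"
      using F g by auto
    ultimately have "W ! (m + g) \<le> rk u" by (metis Suc_leI)
    then show ?thesis using g idx_gate unfolding W_def by auto
  next
    case False
    then obtain i where "i < m" "u = In i" using less.prems unfolding Dm_def by auto
    then show ?thesis using F unfolding W_def by auto
  qed
qed

lemma count_map_inj: "\<forall>x\<in>set xs. x \<in> Dm \<Longrightarrow> u \<in> Dm \<Longrightarrow> count_list (map (idx m gs) xs) (idx m gs u) = count_list xs u"
  by (induction xs) (auto dest: idx_inj)

lemma fanout_eq: "u \<in> Dm \<Longrightarrow> fanout CC (idx m gs u) = sum_list (map (\<lambda>v. count_list (pr v) u) gs) + count_list outs u"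
proof -
  assume u: "u \<in> Dm"
  have a: "\<forall>v\<in>set gs. count_list (map (idx m gs) (pr v)) (idx m gs u) = count_list (pr v) u"
    using prs u count_map_inj unfolding Dm_def by blast
  have b: "count_list (map (idx m gs) outs) (idx m gs u) = count_list outs u"
    using outsd u count_map_inj unfolding Dm_def by blast
  show ?thesis unfolding fanout_def build_def using a b
    by (simp add: comp_def) (metis (no_types, lifting) map_cong)
qed

lemma wire_dom: "w < m + length gs \<Longrightarrow> \<exists>u\<in>Dm. w = idx m gs u"
proof (cases "w < m")
  case True then show ?thesis unfolding Dm_def by (intro bexI[of _ "In w"]) auto
next
  case False
  assume w: "w < m + length gs"
  then have g: "w - m < length gs" using False by simp
  have "w = idx m gs (gs ! (w - m))" using idx_gate[OF g] False by simp
  then show ?thesis unfolding Dm_def using nth_mem[OF g] by blast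
qed

lemma fanout_bound:
  assumes su: "\<And>u v. v \<in> set gs \<Longrightarrow> u \<in> set (pr v) \<Longrightarrow> v \<in> set (succs u)"
    and ls: "\<And>u. length (succs u) \<le> K"
    and lp: "\<And>v. v \<in> set gs \<Longrightarrow> length (pr v) \<le> K"
    and od: "distinct outs"
  shows "max_fanout CC (K * K + 1)"
  unfolding max_fanout_def
proof (intro allI impI)
  fix w assume "w < c_inputs CC + length (c_gates CC)"
  then obtain u where u: "u \<in> Dm" "w = idx m gs u" using wire_dom by (auto simp: build_def)
  have "sum_list (map (\<lambda>v. count_list (pr v) u) gs) = (\<Sum>v\<in>set gs. count_list (pr v) u)"
    using dist by (simp add: sum_list_distinct_conv_sum_set)
  also have "\<dots> = (\<Sum>v\<in>set gs \<inter> set (succs u). count_list (pr v) u)"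
    by (rule sum.mono_neutral_right) (auto dest: su simp: count_list_0_iff)
  also have "\<dots> \<le> (\<Sum>v\<in>set gs \<inter> set (succs u). K)"
  proof (rule sum_mono)
    fix v assume "v \<in> set gs \<inter> set (succs u)"
    then have "length (pr v) \<le> K" using lp by blast
    moreover have "count_list (pr v) u \<le> length (pr v)" by (rule count_le_length)
    ultimately show "count_list (pr v) u \<le> K" by linarith
  qed
  also have "\<dots> = card (set gs \<inter> set (succs u)) * K" by simp
  also have "\<dots> \<le> K * K"
  proof -
    have "card (set gs \<inter> set (succs u)) \<le> card (set (succs u))" by (rule card_mono) auto
    also have "\<dots> \<le> K" using card_length[of "succs u"] ls[of u] by linarith
    finally show ?thesis by simp
  qed
  finally have "sum_list (map (\<lambda>v. count_list (pr v) u) gs) \<le> K * K" .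
  moreover have "count_list outs u \<le> 1" using od by (induction outs) (auto simp: count_list_0_iff)
  ultimately show "fanout CC w \<le> K * K + 1" using fanout_eq u by simp
qed

lemma max_fanin: "(\<And>v. v \<in> set gs \<Longrightarrow> length (pr v) \<le> K) \<Longrightarrow> max_fanin CC K"
  unfolding max_fanin_def build_def by auto

lemma eval: 
  assumes len: "length inp = m"
    and sin: "\<And>i. i < m \<Longrightarrow> sem (In i) = inp ! i"
    and sg: "\<And>v. v \<in> set gs \<Longrightarrow> sem v = fn v (map sem (pr v))"
  shows "eval_circuit CC inp = map sem outs"
proof -
  have "\<forall>u\<in>set outs. wire_vals CC inp ! idx m gs u = sem u"
  proof
    fix u assume "u \<in> set outs"
    then have "u \<in> Dm" using outsd unfolding Dm_def by auto
    then show "wire_vals CC inp ! idx m gs u = sem u" using vals[OF assms] by blast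
  qed
  moreover have "c_outputs CC = map (idx m gs) outs" by (simp add: build_def)
  ultimately show ?thesis unfolding eval_circuit_def by simp
qed

lemma depth: 
  assumes "\<And>u. u \<in> set outs \<Longrightarrow> rk u \<le> B"
  shows "depth_c CC \<le> B"
proof -
  have "\<forall>u\<in>set outs. wire_depths CC ! idx m gs u \<le> B"
  proof
    fix u assume u: "u \<in> set outs"
    then have "u \<in> Dm" using outsd unfolding Dm_def by auto
    then have "wire_depths CC ! idx m gs u \<le> rk u" using depths[of "replicate m False"] by simp
    then show "wire_depths CC ! idx m gs u \<le> B" using assms[OF u] by linarith
  qed
  then show ?thesis unfolding depth_c_def build_def by (auto intro!: Max.boundedI)
qed

end



definition bitI :: "int \<Rightarrow> nat \<Rightarrow> bool" where "bitI a j = odd (a div 2^j)"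

lemma decomp: "(a::int) mod 2^(Suc j) = a mod 2^j + 2^j * (if bitI a j then 1 else 0)"
proof -
  have "a mod (2^j * 2) = 2^j * (a div 2^j mod 2) + a mod 2^j" by (rule zmod_zmult2_eq) simp
  moreover have "a div 2^j mod 2 = (if bitI a j then 1 else 0)" unfolding bitI_def
    by (simp add: odd_iff_mod_2_eq_one even_iff_mod_2_eq_zero)
  ultimately show ?thesis by (simp add: mult.commute)
qed


lemma add_bit: "bitI (a + b) j = (bitI a j \<noteq> (bitI b j \<noteq> (a mod 2^j + b mod 2^j \<ge> 2^j)))"
proof -
  define A where "A = a mod 2^j"
  define B where "B = b mod 2^j"
  define Pw where "Pw = (2::int)^j"
  have r: "0 \<le> A" "A < Pw" "0 \<le> B" "B < Pw" "0 < Pw" unfolding A_def B_def Pw_def by auto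
  have "(a + b) div 2^j = a div 2^j + b div 2^j + ((a mod 2^j + b mod 2^j) div 2^j)" by (rule div_add1_eq)
  moreover have "(A + B) div Pw = (if A + B \<ge> Pw then 1 else 0)"
  proof (cases "A + B \<ge> Pw")
    case True
    have e: "A + B = Pw + (A + B - Pw)" by simp
    have "(A + B - Pw) div Pw = 0" using r True by (intro div_pos_pos_trivial) auto
    then have "(A + B) div Pw = 1" using r by (subst e, subst div_add_self1) auto
    then show ?thesis using True by simp
  next
    case False then show ?thesis using r by (simp add: div_pos_pos_trivial)
  qed
  ultimately show ?thesis unfolding bitI_def A_def B_def Pw_def by auto
qed


lemma mr: "0 \<le> (a::int) mod 2^j" "(a::int) mod 2^j < 2^j" "(0::int) < 2^j" by simp_all

lemma carry_abs: "0 \<le> (A::int) \<Longrightarrow> A < Pw \<Longrightarrow> 0 \<le> B \<Longrightarrow> B < Pw \<Longrightarrow>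
  (A + Pw * (if x then 1 else 0) + (B + Pw * (if y then 1 else 0)) \<ge> 2 * Pw) = ((x \<and> y) \<or> (x \<and> A + B \<ge> Pw) \<or> (y \<and> A + B \<ge> Pw))"
  by (cases x; cases y) simp_all

lemma add_carry: "(a mod 2^(Suc j) + b mod 2^(Suc j) \<ge> (2::int)^(Suc j)) =
   ((bitI a j \<and> bitI b j) \<or> (bitI a j \<and> a mod 2^j + b mod 2^j \<ge> 2^j) \<or> (bitI b j \<and> a mod 2^j + b mod 2^j \<ge> 2^j))"
  unfolding decomp[of a j] decomp[of b j] unfolding power_Suc
  by (rule carry_abs[OF mr(1,2) mr(1,2)])

lemma submod_abs: "0 \<le> (A::int) \<Longrightarrow> A < Pw \<Longrightarrow> 0 \<le> B \<Longrightarrow> B < Pw \<Longrightarrow>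
  ((A - B) mod Pw + B \<ge> Pw) = (A < B)"
proof -
  assume r: "0 \<le> A" "A < Pw" "0 \<le> B" "B < Pw"
  have "(A - B) mod Pw = (if A \<ge> B then A - B else A - B + Pw)"
  proof (cases "A \<ge> B")
    case True then show ?thesis using r by (simp add: mod_pos_pos_trivial)
  next
    case False
    have "(A - B) mod Pw = (A - B + Pw) mod Pw" by simp
    also have "\<dots> = A - B + Pw" using r False by (intro mod_pos_pos_trivial) auto
    finally show ?thesis using False by simp
  qed
  then show ?thesis using r by auto
qed

lemma sub_mod: "((a - b) mod 2^j + b mod 2^j \<ge> (2::int)^j) = (a mod 2^j < b mod 2^j)"
proof -
  have "(a - b) mod 2^j = (a mod 2^j - b mod 2^j) mod (2::int)^j" by (simp add: mod_diff_eq)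
  then show ?thesis using submod_abs[OF mr(1)[of a j] mr(2)[of a j] mr(1)[of b j] mr(2)[of b j]] by simp
qed

lemma sub_bit: "bitI (a - b) j = (bitI a j \<noteq> (bitI b j \<noteq> (a mod 2^j < b mod 2^j)))"
  using add_bit[where a="a - b" and b=b and j=j] sub_mod[where a=a and b=b and j=j] by auto

lemma borrow_abs: "0 \<le> (A::int) \<Longrightarrow> A < Pw \<Longrightarrow> 0 \<le> B \<Longrightarrow> B < Pw \<Longrightarrow>
  (A + Pw * (if x then 1 else 0) < B + Pw * (if y then 1 else 0)) = ((\<not> x \<and> (y \<or> A < B)) \<or> (y \<and> A < B))"
  by (cases x; cases y) simp_all

lemma sub_borrow: "(a mod 2^(Suc j) < b mod (2::int)^(Suc j)) =
   ((\<not> bitI a j \<and> (bitI b j \<or> a mod 2^j < b mod 2^j)) \<or> (bitI b j \<and> a mod 2^j < b mod 2^j))"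
  unfolding decomp[of a j] decomp[of b j]
  by (rule borrow_abs[OF mr(1,2) mr(1,2)])

lemma z_abs: "0 \<le> (A::int) \<Longrightarrow> A < Pw \<Longrightarrow> (A + Pw * (if x then 1 else 0) \<noteq> 0) = (A \<noteq> 0 \<or> x)"
  by (cases x) simp_all

lemma zchain: "((a::int) mod 2^(Suc j) \<noteq> 0) = (a mod 2^j \<noteq> 0 \<or> bitI a j)"
  unfolding decomp[of a j] by (rule z_abs[OF mr(1,2)])

lemma self_decomp: "0 \<le> (d::int) \<Longrightarrow> d \<le> 2^k \<Longrightarrow> d = d mod 2^k + 2^k * (if bitI d k then 1 else 0)"
proof -
  assume d: "0 \<le> d" "d \<le> 2^k"
  have p: "(0::int) < 2^k" by simp
  have "d < 2^Suc k" using d p unfolding power_Suc by linarith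
  then have "d = d mod 2^Suc k" using d by simp
  then show ?thesis using decomp[of d k] by simp
qed

lemma pos_abs: "0 \<le> (A::int) \<Longrightarrow> A < Pw \<Longrightarrow> d = A + Pw * (if x then 1 else 0) \<Longrightarrow> (d > 0) = (x \<or> A \<noteq> 0)"
  by (cases x) (simp_all add: less_le)

lemma pos_crit: "0 \<le> (d::int) \<Longrightarrow> d \<le> 2^k \<Longrightarrow> (d > 0) = (bitI d k \<or> d mod 2^k \<noteq> 0)"
proof -
  assume d: "0 \<le> d" "d \<le> 2^k"
  show ?thesis by (rule pos_abs[OF mr(1)[of d k] mr(2)[of d k] self_decomp[OF d]])
qed

lemma gt_abs: "0 \<le> (A::int) \<Longrightarrow> A < Pw \<Longrightarrow> d = A + Pw * (if y then 1 else 0) + 2 * Pw * (if x then 1 else 0)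
   \<Longrightarrow> d \<le> 2 * Pw \<Longrightarrow> (d > Pw) = (x \<or> (y \<and> A \<noteq> 0))"
  by (cases x; cases y) (simp_all add: less_le)

lemma gt_crit: "0 \<le> (d::int) \<Longrightarrow> d \<le> 2^k \<Longrightarrow> 1 \<le> k \<Longrightarrow>
   (d > 2^(k-1)) = (bitI d k \<or> (bitI d (k-1) \<and> d mod 2^(k-1) \<noteq> 0))"
proof -
  assume d: "0 \<le> d" "d \<le> 2^k" and k: "1 \<le> k"
  obtain k' where k': "k = Suc k'" using k by (cases k) auto
  have e: "d = d mod 2^k + 2^k * (if bitI d k then 1 else 0)" using self_decomp[OF d] .
  have e2: "d mod 2^k = d mod 2^k' + 2^k' * (if bitI d k' then 1 else 0)" using decomp[of d k'] k' by simp
  have pk: "(2::int)^k = 2 * 2^k'" unfolding k' by simp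
  have e3: "d = d mod 2^k' + 2^k' * (if bitI d k' then 1 else 0) + 2 * 2^k' * (if bitI d k then 1 else 0)"
    using e e2 pk by simp
  show ?thesis unfolding k' diff_Suc_1 using gt_abs[OF mr(1,2) e3[unfolded k']] d pk k' by simp
qed


lemma two_pow_pred: "1 \<le> K \<Longrightarrow> (2::int)^K = 2 * 2^(K-1)"
  by (cases K) auto

lemma flagP_right:
  assumes c: "0 \<le> c" "c \<le> 2^(K-1)" and K: "1 \<le> K"
  shows "(t - c > 0) = (t > 2^K \<or> (t > 0 \<and> \<not> (t mod 2^(K+1) < c mod 2^(K+1)) \<and> (bitI (t - c) K \<or> (t - c) mod 2^K \<noteq> 0)))"
proof -
  have pK: "(2::int)^K = 2 * 2^(K-1)" using two_pow_pred[OF K] .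
  have pK1: "(2::int)^(K+1) = 2 * 2^K" by simp
  have pp: "(0::int) < 2^(K-1)" by simp
  show ?thesis
  proof (cases "t > 2^K")
    case True then show ?thesis using c pK pp by auto
  next
    case F1: False
    show ?thesis
    proof (cases "t > 0")
      case False then show ?thesis using F1 c by auto
    next
      case True
      have tm: "t mod 2^(K+1) = t" using True F1 pK1 pp pK by (intro mod_pos_pos_trivial) auto
      have "c < 2^(K+1)" using c pK1 pp pK by linarith
      then have cm: "c mod 2^(K+1) = c" using c by (intro mod_pos_pos_trivial) auto
      show ?thesis
      proof (cases "t < c")
        case True then show ?thesis using tm cm F1 by auto
      next
        case False
        have "(t - c > 0) = (bitI (t - c) K \<or> (t - c) mod 2^K \<noteq> 0)"
          using False F1 c by (intro pos_crit) auto
        then show ?thesis using tm cm F1 False True by auto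
      qed
    qed
  qed
qed

lemma flagG_left:
  assumes K: "1 \<le> K"
  shows "(t > 2^(K-1)) = (t > 2^K \<or> (t > 0 \<and> (bitI t K \<or> (bitI t (K-1) \<and> t mod 2^(K-1) \<noteq> 0))))"
proof -
  have pK: "(2::int)^K = 2 * 2^(K-1)" using two_pow_pred[OF K] .
  have pp: "(0::int) < 2^(K-1)" by simp
  show ?thesis
  proof (cases "t > 2^K")
    case True
    then have "t > 2^(K-1)" using pK pp by linarith
    then show ?thesis using True by auto
  next
    case F1: False
    show ?thesis
    proof (cases "t > 0")
      case False
      then have "\<not> t > 2^(K-1)" using pp by linarith
      then show ?thesis using F1 False by auto
    next
      case True
      have "(t > 2^(K-1)) = (bitI t K \<or> (bitI t (K-1) \<and> t mod 2^(K-1) \<noteq> 0))"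
        using True F1 K by (intro gt_crit) auto
      then show ?thesis using True F1 by auto
    qed
  qed
qed

lemma flagG_right:
  assumes c: "0 \<le> c" "c \<le> 2^(K-1)" and K: "1 \<le> K"
  shows "(t - c > 2^(K-1)) = (t > 2^K \<or> (t > 0 \<and> \<not> (t mod 2^(K+1) < c mod 2^(K+1)) \<and>
      (bitI (t - c) K \<or> (bitI (t - c) (K-1) \<and> (t - c) mod 2^(K-1) \<noteq> 0))))"
proof -
  have pK: "(2::int)^K = 2 * 2^(K-1)" using two_pow_pred[OF K] .
  have pK1: "(2::int)^(K+1) = 2 * 2^K" by simp
  have pp: "(0::int) < 2^(K-1)" by simp
  show ?thesis
  proof (cases "t > 2^K")
    case True then show ?thesis using c pK pp by auto
  next
    case F1: False
    show ?thesis
    proof (cases "t > 0")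
      case False
      then have "\<not> t - c > 2^(K-1)" using pp c by linarith
      then show ?thesis using F1 False by auto
    next
      case True
      have tm: "t mod 2^(K+1) = t" using True F1 pK1 pp pK by (intro mod_pos_pos_trivial) auto
      have "c < 2^(K+1)" using c pK1 pp pK by linarith
      then have cm: "c mod 2^(K+1) = c" using c by (intro mod_pos_pos_trivial) auto
      show ?thesis
      proof (cases "t < c")
        case True
        then have "\<not> t - c > 2^(K-1)" using pp by linarith
        then show ?thesis using tm cm F1 True by auto
      next
        case False
        have "(t - c > 2^(K-1)) = (bitI (t - c) K \<or> (bitI (t - c) (K-1) \<and> (t - c) mod 2^(K-1) \<noteq> 0))"
          using False F1 c K by (intro gt_crit) auto
        then show ?thesis using tm cm F1 False True by auto
      qed
    qed
  qed
qed

lemma bitI_small: "0 \<le> a \<Longrightarrow> a < 2^j \<Longrightarrow> \<not> bitI a j"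
  unfolding bitI_def by (simp add: div_pos_pos_trivial)




fun valid :: "nat \<Rightarrow> node \<Rightarrow> bool" where
  "valid L (In i) = False"
| "valid L (C k p j) = (k \<le> L \<and> p < 2^(L-k) \<and> j \<le> k)"
| "valid L (Cy k p j) = (1 \<le> k \<and> k \<le> L \<and> p < 2^(L-k) \<and> j < k)"
| "valid L (M k p j) = (k \<le> L \<and> p < 2^(L-k) \<and> j \<le> k)"
| "valid L (Br k p j) = (1 \<le> k \<and> k \<le> L \<and> p < 2^(L-k) \<and> j \<le> k+1)"
| "valid L (Dk k p) = (1 \<le> k \<and> k \<le> L \<and> p < 2^(L-k))"
| "valid L (Z k p j) = (k \<le> L \<and> p < 2^(L-k) \<and> j \<le> k+1)"
| "valid L (P k p) = (k \<le> L \<and> p < 2^(L-k))"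
| "valid L (G k p) = (k \<le> L \<and> p < 2^(L-k))"

fun preds :: "nat \<Rightarrow> nat \<Rightarrow> node \<Rightarrow> node list" where
  "preds L n (In i) = []"
| "preds L n (C k p j) = (if k = 0 then (if p < n then [In p] else [])
     else if j < k then [C (k-1) (2*p) j, C (k-1) (2*p+1) j, Cy k p j]
     else [C (k-1) (2*p) (k-1), C (k-1) (2*p+1) (k-1), Cy k p (k-1)])"
| "preds L n (Cy k p j) = (if j = 0 then [] else [C (k-1) (2*p) (j-1), C (k-1) (2*p+1) (j-1), Cy k p (j-1)])"
| "preds L n (M k p j) = (if k = L then (if j < L then [In (n+j)] else [])
     else if even p then [M (k+1) (p div 2) j]
     else [M (k+1) (p div 2) j, C k (p-1) j, Br (k+1) (p div 2) j])"
| "preds L n (Br k p j) = (if j = 0 then [] else if j \<le> k then [M k p (j-1), C (k-1) (2*p) (j-1), Br k p (j-1)]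
     else [M k p k, Br k p k])"
| "preds L n (Dk k p) = [M k p k, Br k p k]"
| "preds L n (Z k p j) = (if j = 0 then [] else [Z k p (j-1), M k p (j-1)])"
| "preds L n (P k p) = (if k = L then [Z k p (k+1)] else if even p then [P (k+1) (p div 2)]
     else [G (k+1) (p div 2), P (k+1) (p div 2), Br (k+1) (p div 2) (k+2), Dk (k+1) (p div 2), Z k p (k+1)])"
| "preds L n (G k p) = (if k = L then [] else if even p then
       [G (k+1) (p div 2), P (k+1) (p div 2), M (k+1) (p div 2) (k+1), M (k+1) (p div 2) k, Z (k+1) (p div 2) k]
     else [G (k+1) (p div 2), P (k+1) (p div 2), Br (k+1) (p div 2) (k+2), Dk (k+1) (p div 2), M k p k, Z k p k])"

definition cp :: "bool list \<Rightarrow> bool" where "cp bs = (case bs of [] \<Rightarrow> False | b # _ \<Rightarrow> b)"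
definition xor3 :: "bool list \<Rightarrow> bool" where "xor3 bs = (bs!0 \<noteq> (bs!1 \<noteq> bs!2))"
definition maj :: "bool list \<Rightarrow> bool" where "maj bs = ((bs!0 \<and> bs!1) \<or> (bs!0 \<and> bs!2) \<or> (bs!1 \<and> bs!2))"
definition bor3 :: "bool list \<Rightarrow> bool" where "bor3 bs = ((\<not> bs!0 \<and> (bs!1 \<or> bs!2)) \<or> (bs!1 \<and> bs!2))"
definition bor2 :: "bool list \<Rightarrow> bool" where "bor2 bs = (\<not> bs!0 \<and> bs!1)"
definition xor2 :: "bool list \<Rightarrow> bool" where "xor2 bs = (bs!0 \<noteq> bs!1)"
definition or2 :: "bool list \<Rightarrow> bool" where "or2 bs = (bs!0 \<or> bs!1)"
definition gl :: "bool list \<Rightarrow> bool" where "gl bs = (bs!0 \<or> (bs!1 \<and> (bs!2 \<or> (bs!3 \<and> bs!4))))"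
definition pr5 :: "bool list \<Rightarrow> bool" where "pr5 bs = (bs!0 \<or> (bs!1 \<and> \<not> bs!2 \<and> (bs!3 \<or> bs!4)))"
definition gr6 :: "bool list \<Rightarrow> bool" where "gr6 bs = (bs!0 \<or> (bs!1 \<and> \<not> bs!2 \<and> (bs!3 \<or> (bs!4 \<and> bs!5))))"

fun fn :: "nat \<Rightarrow> node \<Rightarrow> bool list \<Rightarrow> bool" where
  "fn L (In i) = cp"
| "fn L (C k p j) = (if k = 0 then cp else if j < k then xor3 else maj)"
| "fn L (Cy k p j) = (if j = 0 then cp else maj)"
| "fn L (M k p j) = (if k = L then cp else if even p then cp else xor3)"
| "fn L (Br k p j) = (if j = 0 then cp else if j \<le> k then bor3 else bor2)"
| "fn L (Dk k p) = xor2"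
| "fn L (Z k p j) = (if j = 0 then cp else or2)"
| "fn L (P k p) = (if k = L then cp else if even p then cp else pr5)"
| "fn L (G k p) = (if k = L then cp else if even p then gl else gr6)"

fun rk :: "nat \<Rightarrow> node \<Rightarrow> nat" where
  "rk L (In i) = 0"
| "rk L (C k p j) = 2*(k+j)+1"
| "rk L (Cy k p j) = 2*(k+j)"
| "rk L (M k p j) = 4*L+2 + 4*(L-k) + 2*j"
| "rk L (Br k p j) = 4*L+3 + 4*(L-k) + 2*j"
| "rk L (Dk k p) = 4*L+4 + 4*(L-k) + 2*k"
| "rk L (Z k p j) = 4*L+3 + 4*(L-k) + 2*j"
| "rk L (P k p) = 4*L+6 + 4*(L-k) + 2*k"
| "rk L (G k p) = 4*L+6 + 4*(L-k) + 2*k"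

fun succs :: "nat \<Rightarrow> nat \<Rightarrow> node \<Rightarrow> node list" where
  "succs L n (In i) = [C 0 i 0, M L 0 (i - n)]"
| "succs L n (C k p j) = [C (k+1) (p div 2) j, C (k+1) (p div 2) (k+1), Cy (k+1) (p div 2) (j+1), Br (k+1) (p div 2) (j+1), M k (p+1) j]"
| "succs L n (Cy k p j) = [C k p j, Cy k p (j+1), C k p (j+1)]"
| "succs L n (M k p j) = [M (k-1) (2*p) j, M (k-1) (2*p+1) j, Br k p (j+1), Dk k p, Z k p (j+1), G (k-1) (2*p), G k p]"
| "succs L n (Br k p j) = [Br k p (j+1), M (k-1) (2*p+1) j, Dk k p, P (k-1) (2*p+1), G (k-1) (2*p+1)]"
| "succs L n (Dk k p) = [P (k-1) (2*p+1), G (k-1) (2*p+1)]"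
| "succs L n (Z k p j) = [Z k p (j+1), P k p, G k p, G (k-1) (2*p)]"
| "succs L n (P k p) = [P (k-1) (2*p), G (k-1) (2*p), P (k-1) (2*p+1), G (k-1) (2*p+1)]"
| "succs L n (G k p) = [P (k-1) (2*p), G (k-1) (2*p), P (k-1) (2*p+1), G (k-1) (2*p+1)]"

lemma len_succs: "length (succs L n u) \<le> 7" by (cases u) auto
lemma len_preds: "length (preds L n v) \<le> 7" by (cases v) auto

lemma pw_child: "1 \<le> k \<Longrightarrow> k \<le> L \<Longrightarrow> (p::nat) < 2^(L-k) \<Longrightarrow> 2*p+1 < 2^(L-(k-1))"
proof -
  assume a: "1 \<le> k" "k \<le> L" "p < 2^(L-k)"
  have "L - (k-1) = Suc (L-k)" using a by simp
  then show ?thesis using a by simp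
qed

lemma pw_par: "k < L \<Longrightarrow> (p::nat) < 2^(L-k) \<Longrightarrow> p div 2 < 2^(L-(k+1))"
proof -
  assume a: "k < L" "p < 2^(L-k)"
  have "L - k = Suc (L-(k+1))" using a by simp
  then show ?thesis using a by simp
qed

lemma preds_ok: "valid L v \<Longrightarrow> u \<in> set (preds L n v) \<Longrightarrow>
   rk L u < rk L v \<and> (valid L u \<or> (\<exists>i<n+L. u = In i))"
proof (cases v)
  case (C k p j)
  assume "valid L v" "u \<in> set (preds L n v)"
  then show ?thesis using C pw_child[of k L p] by (auto split: if_splits)
next
  case (Cy k p j)
  assume "valid L v" "u \<in> set (preds L n v)"
  then show ?thesis using Cy pw_child[of k L p] by (auto split: if_splits)
next
  case (M k p j)
  assume "valid L v" "u \<in> set (preds L n v)"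
  then show ?thesis using M pw_par[of k L p] by (auto split: if_splits)
next
  case (Br k p j)
  assume "valid L v" "u \<in> set (preds L n v)"
  then show ?thesis using Br pw_child[of k L p] by (auto split: if_splits)
next
  case (Dk k p)
  assume "valid L v" "u \<in> set (preds L n v)"
  then show ?thesis using Dk by (auto split: if_splits)
next
  case (Z k p j)
  assume "valid L v" "u \<in> set (preds L n v)"
  then show ?thesis using Z by (auto split: if_splits)
next
  case (P k p)
  assume "valid L v" "u \<in> set (preds L n v)"
  then show ?thesis using P pw_par[of k L p] by (auto split: if_splits)
next
  case (G k p)
  assume "valid L v" "u \<in> set (preds L n v)"
  then show ?thesis using G pw_par[of k L p] by (auto split: if_splits)
qed auto

lemma rk_pos: "valid L v \<Longrightarrow> 1 \<le> rk L v" by (cases v) auto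

lemma succs_ok: "valid L v \<Longrightarrow> u \<in> set (preds L n v) \<Longrightarrow> v \<in> set (succs L n u)"
  by (cases v) (auto split: if_splits simp: even_two_times_div_two)




definition xb :: "nat \<Rightarrow> bool list \<Rightarrow> nat \<Rightarrow> bool" where "xb n x i = (i < n \<and> x ! i)"
definition cnt :: "nat \<Rightarrow> bool list \<Rightarrow> nat \<Rightarrow> nat \<Rightarrow> int" where
  "cnt n x k p = (\<Sum>i\<in>{p*2^k..<(p+1)*2^k}. if xb n x i then 1 else 0)"
definition pre :: "nat \<Rightarrow> bool list \<Rightarrow> nat \<Rightarrow> int" where
  "pre n x a = (\<Sum>i\<in>{0..<a}. if xb n x i then 1 else 0)"
definition tt :: "nat \<Rightarrow> bool list \<Rightarrow> nat \<Rightarrow> nat \<Rightarrow> nat \<Rightarrow> int" where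
  "tt n x l k p = int l - pre n x (p*2^k)"

fun sem :: "nat \<Rightarrow> bool list \<Rightarrow> nat \<Rightarrow> node \<Rightarrow> bool" where
  "sem n x l (In i) = b2u_input n x l ! i"
| "sem n x l (C k p j) = bitI (cnt n x k p) j"
| "sem n x l (Cy k p j) = (cnt n x (k-1) (2*p) mod 2^j + cnt n x (k-1) (2*p+1) mod 2^j \<ge> 2^j)"
| "sem n x l (M k p j) = bitI (tt n x l k p) j"
| "sem n x l (Br k p j) = (tt n x l k p mod 2^j < cnt n x (k-1) (2*p) mod 2^j)"
| "sem n x l (Dk k p) = bitI (tt n x l k p - cnt n x (k-1) (2*p)) k"
| "sem n x l (Z k p j) = (tt n x l k p mod 2^j \<noteq> 0)"
| "sem n x l (P k p) = (tt n x l k p > 0)"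
| "sem n x l (G k p) = (tt n x l k p > 2^k)"

lemma cnt_rec: "cnt n x (Suc k) q = cnt n x k (2*q) + cnt n x k (2*q+1)"
proof -
  have a: "q * 2^Suc k = 2*q*2^k" "(q+1)*2^Suc k = (2*q+1+1)*2^k" by simp_all
  show ?thesis unfolding cnt_def a
    by (rule sum.atLeastLessThan_concat[symmetric]) simp_all
qed

lemma cnt_bnd: "0 \<le> cnt n x k p \<and> cnt n x k p \<le> 2^k"
proof -
  have "cnt n x k p \<le> of_nat (card {p*2^k..<(p+1)*2^k}) * 1"
    unfolding cnt_def by (rule sum_bounded_above) auto
  moreover have "card {p*2^k..<(p+1)*2^k} = 2^k" by (simp add: algebra_simps)
  moreover have "0 \<le> cnt n x k p" unfolding cnt_def by (rule sum_nonneg) auto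
  ultimately show ?thesis by simp
qed

lemma tt_left: "tt n x l k (2*q) = tt n x l (Suc k) q"
  unfolding tt_def by (simp add: ac_simps)

lemma tt_right: "tt n x l k (2*q+1) = tt n x l (Suc k) q - cnt n x k (2*q)"
proof -
  have "pre n x ((2*q+1)*2^k) = pre n x (2*q*2^k) + cnt n x k (2*q)"
    unfolding pre_def cnt_def by (rule sum.atLeastLessThan_concat[symmetric]) simp_all
  then show ?thesis unfolding tt_def by (simp add: ac_simps)
qed

lemma cnt0: "cnt n x 0 p = (if xb n x p then 1 else 0)"
  unfolding cnt_def by simp

lemma nth3: "[a,b,c] ! 0 = a" "[a,b,c] ! 1 = b" "[a,b,c] ! 2 = c" by simp_all
lemma nth_small: "[a,b,c,d,e,f] ! 3 = d" "[a,b,c,d,e,f] ! 4 = e" "[a,b,c,d,e,f] ! 5 = f"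
   "[a,b,c,d,e] ! 3 = d" "[a,b,c,d,e] ! 4 = e" by simp_all


lemma inp_x: "length x = n \<Longrightarrow> i < n \<Longrightarrow> b2u_input n x l ! i = x ! i"
  unfolding b2u_input_def by (simp add: nth_append)

lemma inp_l: "length x = n \<Longrightarrow> j < nbits n \<Longrightarrow> b2u_input n x l ! (n + j) = odd (l div 2^j)"
  unfolding b2u_input_def by (simp add: nth_append)

lemma bitI_nat: "bitI (int l) j = odd (l div 2^j)"
  unfolding bitI_def by (metis even_of_nat of_nat_numeral of_nat_power zdiv_int)

lemma cbit_top: "\<not> bitI (cnt n x k p) (Suc k)"
proof -
  have "(0::int) < 2^k" by simp
  then have "cnt n x k p < 2^Suc k" using cnt_bnd[of n x k p] unfolding power_Suc by linarith
  then show ?thesis using cnt_bnd[of n x k p] by (intro bitI_small) auto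
qed

context
  fixes L n :: nat and x :: "bool list" and l :: nat
  assumes Ln: "L = nbits n" and lx: "length x = n" and ln: "l \<le> n" and nL: "n < 2^L"
begin

lemma tt_root: "tt n x l L 0 = int l" unfolding tt_def pre_def by simp

lemma sem_C: "valid L (C k p j) \<Longrightarrow> sem n x l (C k p j) = fn L (C k p j) (map (sem n x l) (preds L n (C k p j)))"
proof -
  assume v: "valid L (C k p j)"
  show ?thesis
  proof (cases "k = 0")
    case True
    then have "j = 0" using v by simp
    then show ?thesis using True lx by (auto simp: cnt0 cp_def xb_def bitI_def inp_x)
  next
    case False
    then obtain k' where k': "k = Suc k'" by (cases k) auto
    show ?thesis
    proof (cases "j < k")
      case True
      then show ?thesis unfolding k' using add_bit[where a="cnt n x k' (2*p)" and b="cnt n x k' (2*p+1)" and j=j]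
        by (simp add: xor3_def cnt_rec)
    next
      case False
      then have j: "j = Suc k'" using v k' by simp
      have "bitI (cnt n x k' (2*p) + cnt n x k' (2*p+1)) (Suc k') =
           (2^Suc k' \<le> cnt n x k' (2*p) mod 2^Suc k' + cnt n x k' (2*p+1) mod 2^Suc k')"
        using add_bit[where a="cnt n x k' (2*p)" and b="cnt n x k' (2*p+1)" and j="Suc k'"] cbit_top by simp
      then show ?thesis unfolding k' j using add_carry[where a="cnt n x k' (2*p)" and j=k' and b="cnt n x k' (2*p+1)"]
        by (simp add: maj_def cnt_rec)
    qed
  qed
qed

lemma sem_Cy: "valid L (Cy k p j) \<Longrightarrow> sem n x l (Cy k p j) = fn L (Cy k p j) (map (sem n x l) (preds L n (Cy k p j)))"
proof (cases j)
  case 0 then show ?thesis by (simp add: cp_def)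
next
  case (Suc j')
  then show ?thesis using add_carry[where a="cnt n x (k-1) (2*p)" and j=j' and b="cnt n x (k-1) (2*p+1)"]
    by (simp add: maj_def)
qed

lemma sem_M: "valid L (M k p j) \<Longrightarrow> sem n x l (M k p j) = fn L (M k p j) (map (sem n x l) (preds L n (M k p j)))"
proof -
  assume v: "valid L (M k p j)"
  show ?thesis
  proof (cases "k = L")
    case True
    then have p: "p = 0" using v by simp
    have tr: "tt n x l k p = int l" using p True tt_root by simp
    show ?thesis
    proof (cases "j < L")
      case True
      then show ?thesis using \<open>k = L\<close> p inp_l[OF lx, of j l] Ln tr by (simp add: cp_def bitI_nat)
    next
      case False
      have "int l < 2^L" using ln nL by (metis le_less_trans of_nat_less_iff of_nat_numeral of_nat_power)
      then have "\<not> bitI (int l) L" by (intro bitI_small) auto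
      then show ?thesis using False \<open>k = L\<close> p v tr by (simp add: cp_def)
    qed
  next
    case False
    then have kL: "k < L" using v by simp
    define q where "q = p div 2"
    show ?thesis
    proof (cases "even p")
      case True
      then have "p = 2*q" unfolding q_def by simp
      then show ?thesis using False True by (simp add: cp_def tt_left q_def[symmetric])
    next
      case odd: False
      then have pq: "p = 2*q+1" unfolding q_def by simp
      then have pm: "p - Suc 0 = 2*q" by simp
      have tr: "tt n x l k p = tt n x l (Suc k) q - cnt n x k (2*q)" using pq tt_right by simp
      show ?thesis using False odd tr sub_bit[where a="tt n x l (Suc k) q" and b="cnt n x k (2*q)" and j=j]
        by (simp add: pm xor3_def q_def[symmetric])
    qed
  qed
qed

lemma sem_Br: "valid L (Br k p j) \<Longrightarrow> sem n x l (Br k p j) = fn L (Br k p j) (map (sem n x l) (preds L n (Br k p j)))"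
proof -
  assume v: "valid L (Br k p j)"
  show ?thesis
  proof (cases j)
    case 0 then show ?thesis by (simp add: cp_def)
  next
    case (Suc j')
    show ?thesis
    proof (cases "j \<le> k")
      case True
      then show ?thesis using Suc sub_borrow[where a="tt n x l k p" and j=j' and b="cnt n x (k-1) (2*p)"]
        by (simp add: bor3_def)
    next
      case False
      then have j': "j' = k" using v Suc by simp
      have kk: "k = Suc (k-1)" using v by simp
      have "\<not> bitI (cnt n x (k-1) (2*p)) k" using cbit_top[of n x "k-1" "2*p"] kk by simp
      then show ?thesis using Suc j' False sub_borrow[where a="tt n x l k p" and j=k and b="cnt n x (k-1) (2*p)"]
        by (simp add: bor2_def)
    qed
  qed
qed

lemma sem_Dk: "valid L (Dk k p) \<Longrightarrow> sem n x l (Dk k p) = fn L (Dk k p) (map (sem n x l) (preds L n (Dk k p)))"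
proof -
  assume v: "valid L (Dk k p)"
  have kk: "k = Suc (k-1)" using v by simp
  have "\<not> bitI (cnt n x (k-1) (2*p)) k" using cbit_top[of n x "k-1" "2*p"] kk by simp
  then show ?thesis using sub_bit[where a="tt n x l k p" and b="cnt n x (k-1) (2*p)" and j=k] by (simp add: xor2_def)
qed

lemma sem_Z: "valid L (Z k p j) \<Longrightarrow> sem n x l (Z k p j) = fn L (Z k p j) (map (sem n x l) (preds L n (Z k p j)))"
proof (cases j)
  case 0 then show ?thesis by (simp add: cp_def)
next
  case (Suc j')
  then show ?thesis using zchain[where a="tt n x l k p" and j=j'] by (simp add: or2_def)
qed


lemma l_lt: "int l < 2^L"
  using ln nL by (metis le_less_trans of_nat_less_iff of_nat_numeral of_nat_power)

lemma sem_P: "valid L (P k p) \<Longrightarrow> sem n x l (P k p) = fn L (P k p) (map (sem n x l) (preds L n (P k p)))"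
proof -
  assume v: "valid L (P k p)"
  show ?thesis
  proof (cases "k = L")
    case True
    then have p: "p = 0" using v by simp
    have tr: "tt n x l k p = int l" using p True tt_root by simp
    have "(0::int) < 2^L" by simp
    then have "int l < 2^(L+1)" using l_lt unfolding power_add power_one_right by linarith
    then have "int l mod 2^(L+1) = int l" by (intro mod_pos_pos_trivial) auto
    then show ?thesis using True tr by (simp add: cp_def)
  next
    case False
    define q where "q = p div 2"
    show ?thesis
    proof (cases "even p")
      case True
      then have "p = 2*q" unfolding q_def by simp
      then show ?thesis using False True by (simp add: cp_def tt_left q_def[symmetric])
    next
      case odd: False
      then have pq: "p = 2*q+1" unfolding q_def by simp
      have tr: "tt n x l k p = tt n x l (Suc k) q - cnt n x k (2*q)" using pq tt_right by simp
      have c: "0 \<le> cnt n x k (2*q)" "cnt n x k (2*q) \<le> 2^(Suc k - 1)" using cnt_bnd[of n x k "2*q"] by auto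
      have e: "Suc k + 1 = k + 2" by simp
      show ?thesis using False odd tr flagP_right[OF c, of "tt n x l (Suc k) q"]
        by (simp add: pr5_def q_def[symmetric] e)
    qed
  qed
qed

lemma sem_G: "valid L (G k p) \<Longrightarrow> sem n x l (G k p) = fn L (G k p) (map (sem n x l) (preds L n (G k p)))"
proof -
  assume v: "valid L (G k p)"
  show ?thesis
  proof (cases "k = L")
    case True
    then have p: "p = 0" using v by simp
    have tr: "tt n x l k p = int l" using p True tt_root by simp
    then show ?thesis using True l_lt by (simp add: cp_def)
  next
    case False
    define q where "q = p div 2"
    show ?thesis
    proof (cases "even p")
      case True
      then have "p = 2*q" unfolding q_def by simp
      then have tr: "tt n x l k p = tt n x l (Suc k) q" by (simp add: tt_left)
      show ?thesis using False True tr flagG_left[of "Suc k" "tt n x l (Suc k) q"]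
        by (simp add: gl_def q_def[symmetric])
    next
      case odd: False
      then have pq: "p = 2*q+1" unfolding q_def by simp
      have tr: "tt n x l k p = tt n x l (Suc k) q - cnt n x k (2*q)" using pq tt_right by simp
      have c: "0 \<le> cnt n x k (2*q)" "cnt n x k (2*q) \<le> 2^(Suc k - 1)" using cnt_bnd[of n x k "2*q"] by auto
      have e: "Suc k + 1 = k + 2" by simp
      show ?thesis using False odd tr flagG_right[OF c, of "tt n x l (Suc k) q"]
        by (simp add: gr6_def q_def[symmetric] e)
    qed
  qed
qed

lemma sem_ok: "valid L v \<Longrightarrow> sem n x l v = fn L v (map (sem n x l) (preds L n v))"
  using sem_C sem_Cy sem_M sem_Br sem_Dk sem_Z sem_P sem_G by (cases v) auto

end



lemma nbits_lt: "n < 2 ^ nbits n"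
  unfolding nbits_def by (rule LeastI[of _ n]) simp

lemma nbits_ge: "1 \<le> n \<Longrightarrow> 1 \<le> nbits n \<and> 2 ^ (nbits n - 1) \<le> n"
proof -
  assume n: "1 \<le> n"
  have "nbits n \<noteq> 0" using nbits_lt[of n] n by (cases "nbits n") auto
  moreover have "\<not> n < 2 ^ (nbits n - 1)"
  proof
    assume "n < 2 ^ (nbits n - 1)"
    then have "nbits n \<le> nbits n - 1" unfolding nbits_def by (rule Least_le)
    then show False using \<open>nbits n \<noteq> 0\<close> by simp
  qed
  ultimately show ?thesis by simp
qed

lemma sumT: "(\<Sum>k\<le>L. 2^(L-k) * (k+2::nat)) + L + 4 = 6 * 2^L"
proof (induction L)
  case 0 then show ?case by simp
next
  case (Suc L)
  have "(\<Sum>k\<le>Suc L. 2^(Suc L-k) * (k+2::nat)) = (\<Sum>k\<le>L. 2^(Suc L-k) * (k+2)) + (L+3)"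
    by simp
  also have "(\<Sum>k\<le>L. 2^(Suc L-k) * (k+2::nat)) = 2 * (\<Sum>k\<le>L. 2^(L-k) * (k+2))"
    by (simp add: sum_distrib_left Suc_diff_le mult.assoc)
  finally show ?case using Suc by simp
qed

definition TT :: "nat \<Rightarrow> (nat \<times> nat \<times> nat) set" where
  "TT L = Sigma {..L} (\<lambda>k. {..<2^(L-k)} \<times> {..k+1})"

lemma TT_card: "card (TT L) \<le> 6 * 2^L"
proof -
  have "card (TT L) = (\<Sum>k\<le>L. 2^(L-k) * (k+2))"
    unfolding TT_def by (simp add: card_cartesian_product)
  then show ?thesis using sumT[of L] by linarith
qed

lemma TT_fin: "finite (TT L)" unfolding TT_def by auto

definition fs :: "(nat \<times> nat \<times> nat \<Rightarrow> node) list" where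
  "fs = [(\<lambda>(k,p,j). C k p j), (\<lambda>(k,p,j). Cy k p j), (\<lambda>(k,p,j). M k p j), (\<lambda>(k,p,j). Br k p j),
         (\<lambda>(k,p,j). Dk k p), (\<lambda>(k,p,j). Z k p j), (\<lambda>(k,p,j). P k p), (\<lambda>(k,p,j). G k p)]"

lemma in_UN: "t \<in> TT L \<Longrightarrow> f \<in> set fs \<Longrightarrow> v = f t \<Longrightarrow> v \<in> (\<Union>f\<in>set fs. f ` TT L)"
  by blast

lemma V_sub: "{v. valid L v} \<subseteq> (\<Union>f\<in>set fs. f ` TT L)"
proof (rule subsetI)
  fix v assume "v \<in> {v. valid L v}"
  then have v: "valid L v" by simp
  show "v \<in> (\<Union>f\<in>set fs. f ` TT L)"
  proof (cases v)
    case (C k p j) then have "(k,p,j) \<in> TT L" using v unfolding TT_def by auto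
    then show ?thesis by (rule in_UN[where f="\<lambda>(k,p,j). C k p j"]) (simp_all add: fs_def C)
  next
    case (Cy k p j) then have "(k,p,j) \<in> TT L" using v unfolding TT_def by auto
    then show ?thesis by (rule in_UN[where f="\<lambda>(k,p,j). Cy k p j"]) (simp_all add: fs_def Cy)
  next
    case (M k p j) then have "(k,p,j) \<in> TT L" using v unfolding TT_def by auto
    then show ?thesis by (rule in_UN[where f="\<lambda>(k,p,j). M k p j"]) (simp_all add: fs_def M)
  next
    case (Br k p j) then have "(k,p,j) \<in> TT L" using v unfolding TT_def by auto
    then show ?thesis by (rule in_UN[where f="\<lambda>(k,p,j). Br k p j"]) (simp_all add: fs_def Br)
  next
    case (Dk k p) then have "(k,p,0) \<in> TT L" using v unfolding TT_def by auto
    then show ?thesis by (rule in_UN[where f="\<lambda>(k,p,j). Dk k p"]) (simp_all add: fs_def Dk)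
  next
    case (Z k p j) then have "(k,p,j) \<in> TT L" using v unfolding TT_def by auto
    then show ?thesis by (rule in_UN[where f="\<lambda>(k,p,j). Z k p j"]) (simp_all add: fs_def Z)
  next
    case (P k p) then have "(k,p,0) \<in> TT L" using v unfolding TT_def by auto
    then show ?thesis by (rule in_UN[where f="\<lambda>(k,p,j). P k p"]) (simp_all add: fs_def P)
  next
    case (G k p) then have "(k,p,0) \<in> TT L" using v unfolding TT_def by auto
    then show ?thesis by (rule in_UN[where f="\<lambda>(k,p,j). G k p"]) (simp_all add: fs_def G)
  qed (use v in simp)
qed

lemma V_fin: "finite {v. valid L v}"
  by (rule finite_subset[OF V_sub]) (simp add: TT_fin)

lemma card_img: "card (f ` TT L) \<le> 6 * 2^L"
  using card_image_le[OF TT_fin[of L], of f] TT_card[of L] by linarith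

lemma V_card: "card {v. valid L v} \<le> 48 * 2^L"
proof -
  have "card {v. valid L v} \<le> card (\<Union>f\<in>set fs. f ` TT L)"
    by (rule card_mono[OF _ V_sub]) (simp add: TT_fin)
  also have "\<dots> \<le> (\<Sum>f\<in>set fs. card (f ` TT L))" by (rule card_UN_le) simp
  also have "\<dots> \<le> of_nat (card (set fs)) * (6 * 2^L)" by (rule sum_bounded_above) (rule card_img)
  also have "card (set fs) \<le> 8" using card_length[of fs] unfolding fs_def by simp
  then have "of_nat (card (set fs)) * (6 * 2^L) \<le> (8::nat) * (6 * 2^L)" by simp
  finally show ?thesis by simp
qed

lemma pre_card: "length x = n \<Longrightarrow> i \<le> n \<Longrightarrow> pre n x i = int (card {j. j < i \<and> x ! j})"
proof -
  assume a: "length x = n" "i \<le> n"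
  have "pre n x i = (\<Sum>j\<in>{0..<i}. of_bool (xb n x j))" unfolding pre_def by (simp add: of_bool_def)
  also have "\<dots> = int (card ({0..<i} \<inter> {j. xb n x j}))" by simp
  also have "{0..<i} \<inter> {j. xb n x j} = {j. j < i \<and> x ! j}" using a unfolding xb_def by auto
  finally show ?thesis .
qed




lemma construct: "1 \<le> n \<Longrightarrow> \<exists>C. wf_circuit C \<and> max_fanin C 50 \<and> max_fanout C 50 \<and>
   size_c C \<le> 96 * n \<and> depth_c C \<le> 8 * nbits n + 6 \<and> solves_b2u n C"
proof -
  assume n: "1 \<le> n"
  define L where "L = nbits n"
  obtain xs where xs: "set xs = {v. valid L v}" "distinct xs" using finite_distinct_list[OF V_fin] by blast
  define gs where "gs = sort_key (rk L) xs"
  define outs where "outs = map (\<lambda>p. P 0 p) [0..<n]"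
  have nL: "n < 2^L" using nbits_lt L_def by simp
  have sg: "set gs = {v. valid L v}" unfolding gs_def using xs by simp
  interpret cc: compiled "n+L" gs "preds L n" "fn L" "rk L" outs
  proof
    show "distinct gs" unfolding gs_def using xs by simp
    show "\<And>i. In i \<notin> set gs" using sg by simp
    show "sorted (map (rk L) gs)" unfolding gs_def by simp
  next
    fix v u assume v: "v \<in> set gs" and u: "u \<in> set (preds L n v)"
    have "valid L v" using v sg by simp
    then have "rk L u < rk L v \<and> (valid L u \<or> (\<exists>i<n+L. u = In i))" using u by (rule preds_ok)
    then show "rk L u < rk L v \<and> (u \<in> set gs \<or> (\<exists>i<n + L. u = In i))" using sg by simp
  next
    show "\<And>v. v \<in> set gs \<Longrightarrow> 1 \<le> rk L v" using sg rk_pos by simp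
    show "\<And>u. u \<in> set outs \<Longrightarrow> u \<in> set gs \<or> (\<exists>i<n + L. u = In i)"
      using sg nL unfolding outs_def by auto
  qed
  define CC where "CC = build (n+L) gs (preds L n) (fn L) outs"
  show ?thesis
  proof (intro exI conjI)
    show "wf_circuit CC" unfolding CC_def by (rule cc.wf)
    show "max_fanin CC 50" unfolding CC_def
      by (rule cc.max_fanin) (rule le_trans[OF len_preds], simp)
    have "max_fanout CC (7*7+1)" unfolding CC_def
    proof (rule cc.fanout_bound[where succs="succs L n"])
      show "\<And>u v. v \<in> set gs \<Longrightarrow> u \<in> set (preds L n v) \<Longrightarrow> v \<in> set (succs L n u)"
        using sg succs_ok by simp
      show "\<And>u. length (succs L n u) \<le> 7" by (rule len_succs)
      show "\<And>v. v \<in> set gs \<Longrightarrow> length (preds L n v) \<le> 7" by (rule len_preds)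
      show "distinct outs" unfolding outs_def by (simp add: distinct_map inj_on_def)
    qed
    then show "max_fanout CC 50" by simp
    have "size_c CC = length gs" unfolding CC_def by (rule cc.size)
    also have "\<dots> = length xs" unfolding gs_def by simp
    also have "\<dots> = card {v. valid L v}" using distinct_card[OF xs(2)] xs(1) by simp
    also have "\<dots> \<le> 48 * 2^L" by (rule V_card)
    also have "2^L \<le> 2 * n"
    proof -
      have "2^(L-1) \<le> n" "1 \<le> L" using nbits_ge[OF n] L_def by auto
      moreover have "(2::nat)^L = 2*2^(L-1)" using \<open>1 \<le> L\<close> by (cases L) auto
      ultimately show ?thesis by linarith
    qed
    finally show "size_c CC \<le> 96 * n" by simp
    show "depth_c CC \<le> 8 * nbits n + 6" unfolding CC_def
      by (rule cc.depth) (auto simp: outs_def L_def)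
    show "solves_b2u n CC"
      unfolding solves_b2u_def
    proof (intro conjI allI impI)
      show "c_inputs CC = n + nbits n" unfolding CC_def build_def L_def by simp
      show "length (c_outputs CC) = n" unfolding CC_def build_def outs_def by simp
      fix x :: "bool list" and l :: nat
      assume lx: "length x = n" and ln: "l \<le> n"
      have ev: "eval_circuit CC (b2u_input n x l) = map (sem n x l) outs" unfolding CC_def
      proof (rule cc.eval)
        show "length (b2u_input n x l) = n + L" unfolding b2u_input_def L_def using lx by simp
        show "\<And>i. i < n + L \<Longrightarrow> sem n x l (In i) = b2u_input n x l ! i" by simp
        show "\<And>v. v \<in> set gs \<Longrightarrow> sem n x l v = fn L v (map (sem n x l) (preds L n v))"
          using sg sem_ok[OF L_def lx ln nL] by simp
      qed
      show "let y = eval_circuit CC (b2u_input n x l) in \<forall>i<n. x ! i \<longrightarrow> y ! i = (card {j. j < i \<and> x ! j} < l)"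
        unfolding ev Let_def
      proof (intro allI impI)
        fix i assume i: "i < n"
        have "map (sem n x l) outs ! i = sem n x l (P 0 i)" unfolding outs_def using i by simp
        also have "\<dots> = (int l - pre n x i > 0)" by (simp add: tt_def)
        also have "\<dots> = (card {j. j < i \<and> x ! j} < l)" using pre_card[OF lx, of i] i by simp
        finally show "map (sem n x l) outs ! i = (card {j. j < i \<and> x ! j} < l)" .
      qed
    qed
  qed
qed

theorem mainTheorem10:
  shows "\<exists>(c::nat) (a::real) (b::real). \<forall>n::nat. n \<ge> 1 \<longrightarrow>
    (\<exists>C. wf_circuit C \<and> max_fanin C c \<and> max_fanout C c \<and>
         real (size_c C) \<le> a * real n \<and>
         real (depth_c C) \<le> b * (1 + log 2 (real n)) \<and>
         solves_b2u n C)"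
proof (rule exI[of _ 50], rule exI[of _ 96], rule exI[of _ 14], intro allI impI)
  fix n :: nat assume n: "1 \<le> n"
  obtain C where C: "wf_circuit C" "max_fanin C 50" "max_fanout C 50" "size_c C \<le> 96 * n"
     "depth_c C \<le> 8 * nbits n + 6" "solves_b2u n C" using construct[OF n] by blast
  have s: "real (size_c C) \<le> 96 * real n" using C(4) by (metis of_nat_le_iff of_nat_mult of_nat_numeral)
  have g: "2^(nbits n - 1) \<le> n" "1 \<le> nbits n" using nbits_ge[OF n] by auto
  have r: "(2::real)^(nbits n - 1) \<le> real n" using g(1) by (metis of_nat_le_iff of_nat_numeral of_nat_power)
  have "log 2 ((2::real)^(nbits n - 1)) \<le> log 2 (real n)"
    using r by (intro log_mono) auto
  then have lg: "real (nbits n - 1) \<le> log 2 (real n)" by simp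
  have l0: "0 \<le> log 2 (real n)" using n by simp
  have "real (depth_c C) \<le> 8 * real (nbits n) + 6" using C(5) by (metis of_nat_le_iff of_nat_add of_nat_mult of_nat_numeral)
  also have "\<dots> \<le> 14 * (1 + log 2 (real n))" using lg l0 g by (simp add: of_nat_diff)
  finally have d: "real (depth_c C) \<le> 14 * (1 + log 2 (real n))" .
  show "\<exists>C. wf_circuit C \<and> max_fanin C 50 \<and> max_fanout C 50 \<and>
         real (size_c C) \<le> 96 * real n \<and>
         real (depth_c C) \<le> 14 * (1 + log 2 (real n)) \<and> solves_b2u n C"
    using C s d by blast
qed


end
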